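(* Let $(X,\{R_i\}_{i=0}^d)$ be a symmetric association scheme with adjacency matrices $A_0=I,\dots,A_d$ and intersection numbers $p_{ij}^k$, and let $W=\sum_{i=0}^dw_iA_i$ with $w_0=1$ be a complex Hadamard matrix. If $|X|\geq3$, then \[ H_3(W)=\{1\}\cup\left\{\left(\frac{w_iw_j}{w_k}\right)^{\pm1}\;\middle|\;1\leq i,j,k\leq d,\ p_{ij}^k>0\right\}. \]
   Context: An association scheme $(X,\{R_i\}_{i=0}^d)$ is a partition of $X\times X$ into relations $R_0=\{(x,x)\}$, $R_1,\dots,R_d$ such that for $(x,y)\in R_k$ the number $p_{ij}^k=|\{z\in X:(x,z)\in R_i,(z,y)\in R_j\}|$ depends only on $i,j,k$; it is symmetric if each $R_i$ is symmetric. $A_i$ is the $(0,1)$-matrix indexed by $X$ of $R_i$. A complex Hadamard matrix is a square complex matrix $H$ of order $n=|X|$ with entries of absolute value $1$ and $HH^*=nI$. For $W$ indexed by $X$, \[ H_3(W)=\left\{\frac{W_{x_1,y_1}W_{x_2,y_2}}{W_{x_2,y_1}W_{x_1,y_2}}\;\middle|\;x_1,x_2,y_1,y_2\in X,\ |\{x_1,x_2,y_1,y_2\}|=3\right\}. \] *)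

theory Defs
  imports Complex_Main
begin

definition assoc_scheme :: "'a set \<Rightarrow> nat \<Rightarrow> (nat \<Rightarrow> ('a \<times> 'a) set) \<Rightarrow> bool" where
  "assoc_scheme X d R \<longleftrightarrow>
     finite X \<and> X \<noteq> {} \<and>
     R 0 = {(x, x) | x. x \<in> X} \<and>
     (\<forall>i\<le>d. R i \<noteq> {} \<and> R i \<subseteq> X \<times> X) \<and>
     (\<forall>i\<le>d. \<forall>j\<le>d. i \<noteq> j \<longrightarrow> R i \<inter> R j = {}) \<and>
     (\<Union>i\<le>d. R i) = X \<times> X \<and>
     (\<forall>i\<le>d. \<forall>j\<le>d. \<forall>k\<le>d. \<exists>p. \<forall>(x, y) \<in> R k.
        card {z \<in> X. (x, z) \<in> R i \<and> (z, y) \<in> R j} = p)"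

definition symmetric_assoc_scheme :: "'a set \<Rightarrow> nat \<Rightarrow> (nat \<Rightarrow> ('a \<times> 'a) set) \<Rightarrow> bool" where
  "symmetric_assoc_scheme X d R \<longleftrightarrow>
     assoc_scheme X d R \<and> (\<forall>i\<le>d. \<forall>(x, y) \<in> R i. (y, x) \<in> R i)"

definition inter_num :: "'a set \<Rightarrow> (nat \<Rightarrow> ('a \<times> 'a) set) \<Rightarrow> nat \<Rightarrow> nat \<Rightarrow> nat \<Rightarrow> nat" where
  "inter_num X R i j k =
     (let (x, y) = (SOME xy. xy \<in> R k) in card {z \<in> X. (x, z) \<in> R i \<and> (z, y) \<in> R j})"

definition adj :: "(nat \<Rightarrow> ('a \<times> 'a) set) \<Rightarrow> nat \<Rightarrow> 'a \<Rightarrow> 'a \<Rightarrow> complex" where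
  "adj R i x y = (if (x, y) \<in> R i then 1 else 0)"

definition complex_hadamard :: "'a set \<Rightarrow> ('a \<Rightarrow> 'a \<Rightarrow> complex) \<Rightarrow> bool" where
  "complex_hadamard X H \<longleftrightarrow>
     (\<forall>x\<in>X. \<forall>y\<in>X. cmod (H x y) = 1) \<and>
     (\<forall>x\<in>X. \<forall>y\<in>X. (\<Sum>z\<in>X. H x z * cnj (H y z)) = (if x = y then of_nat (card X) else 0))"

definition H3 :: "'a set \<Rightarrow> ('a \<Rightarrow> 'a \<Rightarrow> complex) \<Rightarrow> complex set" where
  "H3 X W = {W x1 y1 * W x2 y2 / (W x2 y1 * W x1 y2) | x1 x2 y1 y2.
      x1 \<in> X \<and> x2 \<in> X \<and> y1 \<in> X \<and> y2 \<in> X \<and> card {x1, x2, y1, y2} = 3}"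

end

theory Submission
  imports Defs
begin

lemma W_val:
  assumes S: "assoc_scheme X d R" and Wd: "W = (\<lambda>x y. \<Sum>i\<le>d. w i * adj R i x y)"
    and i: "i \<le> d" and xy: "(x, y) \<in> R i"
  shows "W x y = w i"
proof -
  have disj: "\<forall>i\<le>d. \<forall>j\<le>d. i \<noteq> j \<longrightarrow> R i \<inter> R j = {}" using S unfolding assoc_scheme_def by blast
  have "\<And>j. j \<in> {..d} \<Longrightarrow> w j * adj R j x y = (if j = i then w j else 0)"
    using disj i xy unfolding adj_def by auto
  then have "W x y = (\<Sum>j\<le>d. if j = i then w j else 0)" using Wd by (auto intro: sum.cong)
  also have "\<dots> = w i" using i by (simp add: sum.delta')
  finally show ?thesis .
qed

lemma cls:
  assumes S: "assoc_scheme X d R" and "x \<in> X" "y \<in> X"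
  shows "\<exists>i\<le>d. (x, y) \<in> R i"
proof -
  have "(\<Union>i\<le>d. R i) = X \<times> X" using S unfolding assoc_scheme_def by blast
  then show ?thesis using assms by blast
qed

lemma R0_neq:
  assumes S: "assoc_scheme X d R" and "i \<le> d" "1 \<le> i" "(x, y) \<in> R i"
  shows "x \<noteq> y"
proof
  assume e: "x = y"
  have disj: "\<forall>i\<le>d. \<forall>j\<le>d. i \<noteq> j \<longrightarrow> R i \<inter> R j = {}" using S unfolding assoc_scheme_def by blast
  have sub: "\<forall>i\<le>d. R i \<noteq> {} \<and> R i \<subseteq> X \<times> X" using S unfolding assoc_scheme_def by blast
  have r0: "R 0 = {(x, x) | x. x \<in> X}" using S unfolding assoc_scheme_def by blast
  have "x \<in> X" using sub assms by blast
  then have "(x, y) \<in> R 0" using r0 e by blast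
  moreover have "R 0 \<inter> R i = {}" using disj assms(2,3) by auto
  ultimately show False using assms(4) by blast
qed

lemma inter_eq:
  assumes S: "assoc_scheme X d R" and "i \<le> d" "j \<le> d" "k \<le> d" "(x, y) \<in> R k"
  shows "inter_num X R i j k = card {z \<in> X. (x, z) \<in> R i \<and> (z, y) \<in> R j}"
proof -
  have "\<exists>p. \<forall>(x, y) \<in> R k. card {z \<in> X. (x, z) \<in> R i \<and> (z, y) \<in> R j} = p"
    using S assms unfolding assoc_scheme_def by blast
  then obtain p where p: "\<forall>(x, y) \<in> R k. card {z \<in> X. (x, z) \<in> R i \<and> (z, y) \<in> R j} = p" by blast
  have "(SOME xy. xy \<in> R k) \<in> R k" using assms(5) by (rule someI)
  then obtain a b where ab: "(SOME xy. xy \<in> R k) = (a, b)" "(a, b) \<in> R k" by (metis surj_pair)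
  have "inter_num X R i j k = card {z \<in> X. (a, z) \<in> R i \<and> (z, b) \<in> R j}"
    unfolding inter_num_def using ab by simp
  also have "\<dots> = p" using p ab by auto
  also have "\<dots> = card {z \<in> X. (x, z) \<in> R i \<and> (z, y) \<in> R j}" using p assms(5) by auto
  finally show ?thesis .
qed

lemma triple:
  assumes S: "assoc_scheme X d R" and Wd: "W = (\<lambda>x y. \<Sum>i\<le>d. w i * adj R i x y)"
    and X: "a \<in> X" "b \<in> X" "e \<in> X" and n: "a \<noteq> b" "b \<noteq> e" "a \<noteq> e"
  shows "\<exists>i j k. 1 \<le> i \<and> i \<le> d \<and> 1 \<le> j \<and> j \<le> d \<and> 1 \<le> k \<and> k \<le> d \<and>
     inter_num X R i j k > 0 \<and> W a b = w i \<and> W b e = w j \<and> W a e = w k"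
proof -
  have r0: "R 0 = {(x, x) | x. x \<in> X}" using S unfolding assoc_scheme_def by blast
  obtain i where i: "i \<le> d" "(a, b) \<in> R i" using cls[OF S X(1,2)] by blast
  obtain j where j: "j \<le> d" "(b, e) \<in> R j" using cls[OF S X(2,3)] by blast
  obtain k where k: "k \<le> d" "(a, e) \<in> R k" using cls[OF S X(1,3)] by blast
  have nr: "(a, b) \<notin> R 0" "(b, e) \<notin> R 0" "(a, e) \<notin> R 0" using n r0 by auto
  have "i \<noteq> 0" "j \<noteq> 0" "k \<noteq> 0" using i j k nr by metis+
  moreover have "inter_num X R i j k > 0"
  proof -
    have fin: "finite X" using S unfolding assoc_scheme_def by blast
    have "b \<in> {z \<in> X. (a, z) \<in> R i \<and> (z, e) \<in> R j}" using X i j by auto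
    then have "card {z \<in> X. (a, z) \<in> R i \<and> (z, e) \<in> R j} > 0"
      using fin by (metis (no_types, lifting) card_gt_0_iff empty_iff finite_subset mem_Collect_eq subsetI)
    then show ?thesis using inter_eq[OF S i(1) j(1) k] by simp
  qed
  ultimately show ?thesis using i j k W_val[OF S Wd] by (intro exI[of _ i] exI[of _ j] exI[of _ k]) auto
qed

lemma c3D: "card {a, b, c} = 3 \<Longrightarrow> a \<noteq> b \<and> b \<noteq> c \<and> a \<noteq> c"
  by (auto simp: card_insert_if split: if_splits)

lemma c4: "a \<noteq> b \<Longrightarrow> a \<noteq> c \<Longrightarrow> a \<noteq> e \<Longrightarrow> b \<noteq> c \<Longrightarrow> b \<noteq> e \<Longrightarrow> c \<noteq> e \<Longrightarrow> card {a, b, c, e} = 4"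
  by simp

lemma H3I: "x1 \<in> X \<Longrightarrow> x2 \<in> X \<Longrightarrow> y1 \<in> X \<Longrightarrow> y2 \<in> X \<Longrightarrow> card {x1, x2, y1, y2} = 3
  \<Longrightarrow> c = W x1 y1 * W x2 y2 / (W x2 y1 * W x1 y2) \<Longrightarrow> c \<in> H3 X W"
  unfolding H3_def by blast

theorem lemma5p1:
  fixes X :: "'a set" and d :: nat and R :: "nat \<Rightarrow> ('a \<times> 'a) set"
    and w :: "nat \<Rightarrow> complex" and W :: "'a \<Rightarrow> 'a \<Rightarrow> complex"
  assumes "symmetric_assoc_scheme X d R"
    and "W = (\<lambda>x y. \<Sum>i\<le>d. w i * adj R i x y)"
    and "w 0 = 1"
    and "complex_hadamard X W"
    and "card X \<ge> 3"
  shows "H3 X W = {1} \<union>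
     {c | c i j k. 1 \<le> i \<and> i \<le> d \<and> 1 \<le> j \<and> j \<le> d \<and> 1 \<le> k \<and> k \<le> d \<and>
        inter_num X R i j k > 0 \<and>
        (c = w i * w j / w k \<or> c = inverse (w i * w j / w k))}"
proof -
  have S: "assoc_scheme X d R" using assms(1) unfolding symmetric_assoc_scheme_def by blast
  note Wd = assms(2)
  have r0: "R 0 = {(x, x) | x. x \<in> X}" using S unfolding assoc_scheme_def by blast
  have nz: "\<And>x y. x \<in> X \<Longrightarrow> y \<in> X \<Longrightarrow> W x y \<noteq> 0"
    using assms(4) unfolding complex_hadamard_def by fastforce
  have diag: "\<And>x. x \<in> X \<Longrightarrow> W x x = 1"
    using W_val[OF S Wd, of 0] r0 assms(3) by auto
  let ?RHS = "{c | c i j k. 1 \<le> i \<and> i \<le> d \<and> 1 \<le> j \<and> j \<le> d \<and> 1 \<le> k \<and> k \<le> d \<and>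
        inter_num X R i j k > 0 \<and>
        (c = w i * w j / w k \<or> c = inverse (w i * w j / w k))}"
  have wnz: "\<And>a b e. a \<in> X \<Longrightarrow> b \<in> X \<Longrightarrow> e \<in> X \<Longrightarrow> a \<noteq> b \<Longrightarrow> b \<noteq> e \<Longrightarrow> a \<noteq> e \<Longrightarrow>
     \<exists>i j k. 1 \<le> i \<and> i \<le> d \<and> 1 \<le> j \<and> j \<le> d \<and> 1 \<le> k \<and> k \<le> d \<and>
     inter_num X R i j k > 0 \<and> W a b = w i \<and> W b e = w j \<and> W a e = w k"
    using triple[OF S Wd] by blast
  show ?thesis
  proof (intro equalityI subsetI)
    fix c assume "c \<in> H3 X W"
    then obtain x1 x2 y1 y2 where X: "x1 \<in> X" "x2 \<in> X" "y1 \<in> X" "y2 \<in> X"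
      and cd: "card {x1, x2, y1, y2} = 3"
      and c: "c = W x1 y1 * W x2 y2 / (W x2 y1 * W x1 y2)"
      unfolding H3_def by blast
    show "c \<in> {1} \<union> ?RHS"
    proof (cases "x1 = x2 \<or> y1 = y2")
      case True
      have "c = 1"
      proof (cases "x1 = x2")
        case True
        have "W x1 y1 \<noteq> 0" "W x1 y2 \<noteq> 0" using nz X by auto
        then show ?thesis unfolding c True by simp
      next
        case False
        then have e: "y1 = y2" using \<open>x1 = x2 \<or> y1 = y2\<close> by blast
        have "W x1 y1 \<noteq> 0" "W x2 y1 \<noteq> 0" using nz X by auto
        then show ?thesis unfolding c e[symmetric] by simp
      qed
      then show ?thesis by simp
    next
      case False
      have "\<not> (x1 \<noteq> y1 \<and> x1 \<noteq> y2 \<and> x2 \<noteq> y1 \<and> x2 \<noteq> y2)"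
      proof
        assume "x1 \<noteq> y1 \<and> x1 \<noteq> y2 \<and> x2 \<noteq> y1 \<and> x2 \<noteq> y2"
        then have "card {x1, x2, y1, y2} = 4" using False c4[of x1 x2 y1 y2] by blast
        then show False using cd by simp
      qed
      then consider "x1 = y1" | "x1 = y2" | "x2 = y1" | "x2 = y2" by blast
      then show ?thesis
      proof cases
        case 1
        have se1: "{x1, x2, y1, y2} = {x2, x1, y2}" using 1 by auto
        have d: "x2 \<noteq> x1" "x1 \<noteq> y2" "x2 \<noteq> y2" using c3D[OF cd[unfolded se1]] by blast+
        obtain i j k where ijk: "1 \<le> i \<and> i \<le> d \<and> 1 \<le> j \<and> j \<le> d \<and> 1 \<le> k \<and> k \<le> d \<and>
          inter_num X R i j k > 0 \<and> W x2 x1 = w i \<and> W x1 y2 = w j \<and> W x2 y2 = w k"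
          using wnz[OF X(2) X(1) X(4) d] by blast
        have "c = inverse (w i * w j / w k)" using c 1 ijk diag X by simp
        then show ?thesis using ijk by blast
      next
        case 2
        have se2: "{x1, x2, y1, y2} = {x2, x1, y1}" using 2 by auto
        have d: "x2 \<noteq> x1" "x1 \<noteq> y1" "x2 \<noteq> y1" using c3D[OF cd[unfolded se2]] by blast+
        obtain i j k where ijk: "1 \<le> i \<and> i \<le> d \<and> 1 \<le> j \<and> j \<le> d \<and> 1 \<le> k \<and> k \<le> d \<and>
          inter_num X R i j k > 0 \<and> W x2 x1 = w i \<and> W x1 y1 = w j \<and> W x2 y1 = w k"
          using wnz[OF X(2) X(1) X(3) d] by blast
        have "c = w i * w j / w k" using c 2 ijk diag X by (simp add: mult.commute)
        then show ?thesis using ijk by blast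
      next
        case 3
        have se3: "{x1, x2, y1, y2} = {x1, x2, y2}" using 3 by auto
        have d: "x1 \<noteq> x2" "x2 \<noteq> y2" "x1 \<noteq> y2" using c3D[OF cd[unfolded se3]] by blast+
        obtain i j k where ijk: "1 \<le> i \<and> i \<le> d \<and> 1 \<le> j \<and> j \<le> d \<and> 1 \<le> k \<and> k \<le> d \<and>
          inter_num X R i j k > 0 \<and> W x1 x2 = w i \<and> W x2 y2 = w j \<and> W x1 y2 = w k"
          using wnz[OF X(1) X(2) X(4) d] by blast
        have "c = w i * w j / w k" using c 3 ijk diag X by simp
        then show ?thesis using ijk by blast
      next
        case 4
        have se4: "{x1, x2, y1, y2} = {x1, x2, y1}" using 4 by auto
        have d: "x1 \<noteq> x2" "x2 \<noteq> y1" "x1 \<noteq> y1" using c3D[OF cd[unfolded se4]] by blast+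
        obtain i j k where ijk: "1 \<le> i \<and> i \<le> d \<and> 1 \<le> j \<and> j \<le> d \<and> 1 \<le> k \<and> k \<le> d \<and>
          inter_num X R i j k > 0 \<and> W x1 x2 = w i \<and> W x2 y1 = w j \<and> W x1 y1 = w k"
          using wnz[OF X(1) X(2) X(3) d] by blast
        have "c = inverse (w i * w j / w k)" using c 4 ijk diag X by (simp add: mult.commute)
        then show ?thesis using ijk by blast
      qed
    qed
  next
    fix c assume "c \<in> {1} \<union> ?RHS"
    then show "c \<in> H3 X W"
    proof
      assume "c \<in> {1}"
      obtain T where T: "T \<subseteq> X" "card T = 3" using obtain_subset_with_card_n[OF assms(5)] by blast
      then obtain a b e where abe: "T = {a, b, e}" "a \<noteq> b" "b \<noteq> e" "a \<noteq> e"
        unfolding card_3_iff by blast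
      have X3: "a \<in> X" "b \<in> X" "e \<in> X" using T abe by auto
      have "W a b \<noteq> 0" "W a e \<noteq> 0" using nz X3 by auto
      then have 1: "c = W a b * W a e / (W a b * W a e)" using \<open>c \<in> {1}\<close> by simp
      have cc: "card {a, a, b, e} = 3" using abe T by simp
      show ?thesis using H3I[of a X a b e c W, OF X3(1) X3(1) X3(2) X3(3) cc 1] .
    next
      assume "c \<in> ?RHS"
      then obtain i j k where ijk: "1 \<le> i" "i \<le> d" "1 \<le> j" "j \<le> d" "1 \<le> k" "k \<le> d"
        "inter_num X R i j k > 0" "c = w i * w j / w k \<or> c = inverse (w i * w j / w k)" by blast
      have sub: "\<forall>i\<le>d. R i \<noteq> {} \<and> R i \<subseteq> X \<times> X" using S unfolding assoc_scheme_def by blast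
      then obtain x y where xy: "(x, y) \<in> R k" using ijk by fastforce
      have "card {z \<in> X. (x, z) \<in> R i \<and> (z, y) \<in> R j} > 0"
        using inter_eq[OF S ijk(2,4,6) xy] ijk(7) by simp
      then obtain z where z: "z \<in> X" "(x, z) \<in> R i" "(z, y) \<in> R j"
        by (metis (no_types, lifting) card_gt_0_iff ex_in_conv mem_Collect_eq)
      have xX: "x \<in> X" "y \<in> X" using sub xy ijk by blast+
      have d: "x \<noteq> z" "z \<noteq> y" "x \<noteq> y"
        using R0_neq[OF S] ijk z xy by blast+
      have Wv: "W x z = w i" "W z y = w j" "W x y = w k"
        using W_val[OF S Wd] ijk z xy by blast+
      have "{z, x, z, y} = {x, z, y}" by auto
      then have c3: "card {x, z, z, y} = 3" "card {z, x, z, y} = 3" using d by auto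
      show ?thesis
        using ijk(8)
      proof
        assume "c = w i * w j / w k"
        then have e: "c = W x z * W z y / (W z z * W x y)" unfolding Wv diag[OF z(1)] by simp
        show ?thesis using H3I[of x X z z y c W, OF xX(1) z(1) z(1) xX(2) c3(1) e] .
      next
        assume "c = inverse (w i * w j / w k)"
        then have e: "c = W z z * W x y / (W x z * W z y)" unfolding Wv diag[OF z(1)] by simp
        show ?thesis using H3I[of z X x z y c W, OF z(1) xX(1) z(1) xX(2) c3(2) e] .
      qed
    qed
  qed
qed

end
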